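(* Let $R$ be a ring and let $\gamma_1,\gamma_2$ be bijections of $\mathbb{P}(R)$ each induced by a semilinear bijection of $R^2$. If $\gamma_1$ and $\gamma_2$ coincide on all points of some connected component $C$ of $\mathbb{P}(R)$, then $\gamma_1=\gamma_2$.
   Context: $R$ is an associative ring with unit element $1$; $R^*$ denotes its group of units and $\mathrm{GL}_2(R)$ the group of invertible $2\times2$ matrices over $R$. A pair $(a,b)\in R^2$ is admissible if it is the first row of some matrix in $\mathrm{GL}_2(R)$. The projective line $\mathbb{P}(R)$ is the set of all cyclic submodules $R(a,b)$ of the left $R$-module $R^2$ with $(a,b)$ admissible. Two points $R(a,b)$, $R(c,d)$ are distant iff $\begin{pmatrix}a&b\\c&d\end{pmatrix}\in\mathrm{GL}_2(R)$; connected components refer to the graph on $\mathbb{P}(R)$ whose edges are the pairs of distant points. A semilinear bijection of $R^2$ is a bijective additive map $f:R^2\to R^2$ for which there is a ring automorphism $\zeta$ of $R$ with $f(rv)=r^\zeta f(v)$ for all $r\in R$, $v\in R^2$; a bijection $\gamma$ of $\mathbb{P}(R)$ is induced by $f$ if $p^\gamma=f(p)$ for all $p\in\mathbb{P}(R)$. *)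

theory Defs
  imports Main
begin

text \<open>A 2x2 matrix ((a,b),(c,d)) is represented by its four entries.\<close>

definition smul2 :: "'a::ring_1 \<Rightarrow> 'a \<times> 'a \<Rightarrow> 'a \<times> 'a" where
  "smul2 r v = (r * fst v, r * snd v)"

definition inv2 :: "'a::ring_1 \<Rightarrow> 'a \<Rightarrow> 'a \<Rightarrow> 'a \<Rightarrow> bool" where
  "inv2 a b c d \<longleftrightarrow> (\<exists>a' b' c' d'.
      a*a' + b*c' = 1 \<and> a*b' + b*d' = 0 \<and> c*a' + d*c' = 0 \<and> c*b' + d*d' = 1 \<and>
      a'*a + b'*c = 1 \<and> a'*b + b'*d = 0 \<and> c'*a + d'*c = 0 \<and> c'*b + d'*d = 1)"

definition admissible :: "'a::ring_1 \<Rightarrow> 'a \<Rightarrow> bool" where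
  "admissible a b \<longleftrightarrow> (\<exists>c d. inv2 a b c d)"

definition cyc :: "'a::ring_1 \<Rightarrow> 'a \<Rightarrow> ('a \<times> 'a) set" where
  "cyc a b = {(r * a, r * b) | r. True}"

definition projline :: "('a::ring_1 \<times> 'a) set set" where
  "projline = {cyc a b | a b. admissible a b}"

definition distant :: "('a::ring_1 \<times> 'a) set \<Rightarrow> ('a \<times> 'a) set \<Rightarrow> bool" where
  "distant p q \<longleftrightarrow> (\<exists>a b c d. p = cyc a b \<and> q = cyc c d \<and> inv2 a b c d)"

definition distant_rel :: "(('a::ring_1 \<times> 'a) set \<times> ('a \<times> 'a) set) set" where
  "distant_rel = {(p, q). p \<in> projline \<and> q \<in> projline \<and> distant p q}"

definition component :: "('a::ring_1 \<times> 'a) set \<Rightarrow> ('a \<times> 'a) set set" where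
  "component p = {q \<in> projline. (p, q) \<in> distant_rel\<^sup>*}"

definition is_component :: "('a::ring_1 \<times> 'a) set set \<Rightarrow> bool" where
  "is_component C \<longleftrightarrow> (\<exists>p \<in> projline. C = component p)"

definition ring_automorphism :: "('a::ring_1 \<Rightarrow> 'a) \<Rightarrow> bool" where
  "ring_automorphism z \<longleftrightarrow> bij z \<and> (\<forall>x y. z (x + y) = z x + z y) \<and>
     (\<forall>x y. z (x * y) = z x * z y) \<and> z 1 = 1"

definition semilinear_bij :: "('a::ring_1 \<times> 'a \<Rightarrow> 'a \<times> 'a) \<Rightarrow> bool" where
  "semilinear_bij f \<longleftrightarrow> bij f \<and> (\<forall>v w. f (fst v + fst w, snd v + snd w) = (fst (f v) + fst (f w), snd (f v) + snd (f w))) \<and>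
     (\<exists>z. ring_automorphism z \<and> (\<forall>r v. f (smul2 r v) = smul2 (z r) (f v)))"

definition induced_by :: "(('a::ring_1 \<times> 'a) set \<Rightarrow> ('a \<times> 'a) set) \<Rightarrow> ('a \<times> 'a \<Rightarrow> 'a \<times> 'a) \<Rightarrow> bool" where
  "induced_by g f \<longleftrightarrow> (\<forall>p \<in> projline. g p = f ` p)"

end

theory Submission imports Defs begin

lemma inv2_swap: "inv2 a b c d \<Longrightarrow> inv2 c d a b"
  unfolding inv2_def
  apply (elim exE)
  subgoal for a' b' c' d'
    apply (rule exI[of _ b'], rule exI[of _ a'], rule exI[of _ d'], rule exI[of _ c'])
    by (simp add: add.commute)
  done

lemma inv2_rowop:
  fixes a b c d r :: "'a::ring_1"
  assumes "inv2 a b c d"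
  shows "inv2 a b (r*a+c) (r*b+d)"
proof -
  obtain a' b' c' d' where h:
    "a*a' + b*c' = 1" "a*b' + b*d' = 0" "c*a' + d*c' = 0" "c*b' + d*d' = 1"
    "a'*a + b'*c = 1" "a'*b + b'*d = 0" "c'*a + d'*c = 0" "c'*b + d'*d = 1"
    using assms unfolding inv2_def by blast
  have 1: "a*(a'-b'*r) + b*(c'-d'*r) = (a*a'+b*c') - (a*b'+b*d')*r" by (simp add: algebra_simps)
  have 3: "(r*a+c)*(a'-b'*r) + (r*b+d)*(c'-d'*r) = r*(a*a'+b*c') + (c*a'+d*c') - r*(a*b'+b*d')*r - (c*b'+d*d')*r"
    by (simp add: algebra_simps)
  have 4: "(r*a+c)*b' + (r*b+d)*d' = r*(a*b'+b*d') + (c*b'+d*d')" by (simp add: algebra_simps)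
  have 5: "(a'-b'*r)*a + b'*(r*a+c) = a'*a + b'*c" by (simp add: algebra_simps)
  have 6: "(a'-b'*r)*b + b'*(r*b+d) = a'*b+b'*d" by (simp add: algebra_simps)
  have 7: "(c'-d'*r)*a + d'*(r*a+c) = c'*a+d'*c" by (simp add: algebra_simps)
  have 8: "(c'-d'*r)*b + d'*(r*b+d) = c'*b+d'*d" by (simp add: algebra_simps)
  show ?thesis unfolding inv2_def
    apply (rule exI[of _ "a'-b'*r"], rule exI[of _ b'], rule exI[of _ "c'-d'*r"], rule exI[of _ d'])
    using 1 3 4 5 6 7 8 h by simp
qed


lemma key:
  fixes h :: "'a::ring_1 \<times> 'a \<Rightarrow> 'a \<times> 'a" and \<phi> :: "'a \<Rightarrow> 'a"
  assumes add: "\<And>x1 y1 x2 y2. h (x1+x2, y1+y2) = (fst (h (x1,y1)) + fst (h (x2,y2)), snd (h (x1,y1)) + snd (h (x2,y2)))"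
    and hmul: "\<And>r x y. h (r*x, r*y) = (\<phi> r * fst (h (x,y)), \<phi> r * snd (h (x,y)))"
    and phi1: "\<phi> 1 = 1"
    and iv: "inv2 a b c d"
    and fixr: "\<And>r. h ` cyc (r*a+c) (r*b+d) = cyc (r*a+c) (r*b+d)"
    and fix0: "h ` cyc a b = cyc a b"
  shows "h ` cyc x y = cyc x y"
proof -
  obtain a' b' c' d' where hh:
    "a*a' + b*c' = 1" "a*b' + b*d' = 0" "c*a' + d*c' = 0" "c*b' + d*d' = 1"
    "a'*a + b'*c = 1" "a'*b + b'*d = 0" "c'*a + d'*c = 0" "c'*b + d'*d = 1"
    using iv unfolding inv2_def by blast
  have uniq: "\<alpha> = \<alpha>2 \<and> \<beta> = \<beta>2" if "\<alpha>*a + \<beta>*c = \<alpha>2*a + \<beta>2*c" "\<alpha>*b + \<beta>*d = \<alpha>2*b + \<beta>2*d"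
    for \<alpha> \<beta> \<alpha>2 \<beta>2
  proof -
    have e1: "(\<alpha>*a+\<beta>*c)*a' + (\<alpha>*b+\<beta>*d)*c' = \<alpha>*(a*a'+b*c') + \<beta>*(c*a'+d*c')" for \<alpha> \<beta>
      by (simp add: algebra_simps)
    have e2: "(\<alpha>*a+\<beta>*c)*b' + (\<alpha>*b+\<beta>*d)*d' = \<alpha>*(a*b'+b*d') + \<beta>*(c*b'+d*d')" for \<alpha> \<beta>
      by (simp add: algebra_simps)
    show ?thesis using e1[of \<alpha> \<beta>] e1[of \<alpha>2 \<beta>2] e2[of \<alpha> \<beta>] e2[of \<alpha>2 \<beta>2] that hh by simp
  qed
  have "h (a,b) \<in> h ` cyc a b" unfolding cyc_def by (rule imageI) (auto intro: exI[of _ 1])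
  then obtain s where hs: "h (a,b) = (s*a, s*b)" using fix0 unfolding cyc_def by auto
  have "h (c,d) \<in> h ` cyc (0*a+c) (0*b+d)" unfolding cyc_def by (rule imageI) (auto intro: exI[of _ 1])
  then obtain t where ht: "h (c,d) = (t*c, t*d)" using fixr[of 0] unfolding cyc_def by auto
  have comm: "\<phi> r * s = t * r" "t = w" if "h (r*a+c, r*b+d) = (w*(r*a+c), w*(r*b+d))" for r w
  proof -
    have "h (r*a+c, r*b+d) = (\<phi> r * s * a + t*c, \<phi> r * s * b + t*d)"
      using add[of "r*a" c "r*b" d] hmul[of r a b] hs ht by (simp add: mult.assoc)
    with that have "(\<phi> r * s) * a + t*c = (w*r)*a + w*c" "(\<phi> r * s) * b + t*d = (w*r)*b + w*d"
      by (auto simp: algebra_simps)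
    from uniq[OF this] show "\<phi> r * s = t * r" "t = w" by auto
  qed
  have comm2: "\<phi> r * s = t * r" for r
  proof -
    have "h (r*a+c, r*b+d) \<in> h ` cyc (r*a+c) (r*b+d)" unfolding cyc_def by (rule imageI) (auto intro: exI[of _ 1])
    then obtain w where "h (r*a+c, r*b+d) = (w*(r*a+c), w*(r*b+d))" using fixr[of r] unfolding cyc_def by auto
    thus ?thesis using comm by blast
  qed
  have ts: "t = s" using comm2[of 1] phi1 by simp
  have sr: "\<phi> r * s = s * r" for r using comm2 ts by simp
  have hlin: "h (x,y) = (s*x, s*y)" for x y
  proof -
    define \<alpha> where "\<alpha> = x*a' + y*c'"
    define \<beta> where "\<beta> = x*b' + y*d'"
    have ex: "x = \<alpha>*a + \<beta>*c" unfolding \<alpha>_def \<beta>_def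
    proof -
      have "(x*a' + y*c')*a + (x*b'+y*d')*c = x*(a'*a+b'*c) + y*(c'*a+d'*c)" by (simp add: algebra_simps)
      thus "x = (x*a' + y*c')*a + (x*b'+y*d')*c" using hh by simp
    qed
    have ey: "y = \<alpha>*b + \<beta>*d" unfolding \<alpha>_def \<beta>_def
    proof -
      have "(x*a' + y*c')*b + (x*b'+y*d')*d = x*(a'*b+b'*d) + y*(c'*b+d'*d)" by (simp add: algebra_simps)
      thus "y = (x*a' + y*c')*b + (x*b'+y*d')*d" using hh by simp
    qed
    have "h (x,y) = h (\<alpha>*a + \<beta>*c, \<alpha>*b + \<beta>*d)" using ex ey by simp
    also have "\<dots> = (\<phi> \<alpha> * s * a + \<phi> \<beta> * s * c, \<phi> \<alpha> * s * b + \<phi> \<beta> * s * d)"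
      using add[of "\<alpha>*a" "\<beta>*c" "\<alpha>*b" "\<beta>*d"] hmul[of \<alpha> a b] hmul[of \<beta> c d] hs ht ts
      by (simp add: mult.assoc)
    also have "\<dots> = (s*(\<alpha>*a + \<beta>*c), s*(\<alpha>*b + \<beta>*d))" using sr by (simp add: algebra_simps)
    finally show ?thesis using ex ey by simp
  qed
  obtain k where "(a,b) = h (k*a, k*b)" using fix0 unfolding cyc_def
    by (smt (verit) CollectD CollectI imageE mult_1)
  then have "(s*k)*a + 0*c = 1*a + 0*c" "(s*k)*b + 0*d = 1*b + 0*d" using hlin by (auto simp: mult.assoc)
  then have sk: "s*k = 1" using uniq by blast
  show ?thesis
  proof
    show "h ` cyc x y \<subseteq> cyc x y" unfolding cyc_def using hlin by (auto simp: mult.assoc[symmetric])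
  next
    show "cyc x y \<subseteq> h ` cyc x y"
    proof
      fix v assume "v \<in> cyc x y"
      then obtain r where v: "v = (r*x, r*y)" unfolding cyc_def by auto
      have "v = h ((k*r)*x, (k*r)*y)" using v hlin sk by (simp add: mult.assoc[symmetric])
      moreover have "((k*r)*x, (k*r)*y) \<in> cyc x y" unfolding cyc_def by auto
      ultimately show "v \<in> h ` cyc x y" by blast
    qed
  qed
qed


theorem mainTheorem5:
  fixes g1 g2 :: "('a::ring_1 \<times> 'a) set \<Rightarrow> ('a \<times> 'a) set"
    and f1 f2 :: "'a \<times> 'a \<Rightarrow> 'a \<times> 'a"
    and C :: "('a \<times> 'a) set set"
  assumes "bij_betw g1 projline projline" and "bij_betw g2 projline projline"
    and "semilinear_bij f1" and "induced_by g1 f1"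
    and "semilinear_bij f2" and "induced_by g2 f2"
    and "is_component C"
    and "\<forall>p \<in> C. g1 p = g2 p"
  shows "\<forall>p \<in> projline. g1 p = g2 p"
proof -
  obtain z1 where z1: "ring_automorphism z1" "\<And>r v. f1 (smul2 r v) = smul2 (z1 r) (f1 v)"
    and bf1: "bij f1"
    and add1: "\<And>v w. f1 (fst v + fst w, snd v + snd w) = (fst (f1 v) + fst (f1 w), snd (f1 v) + snd (f1 w))"
    using assms(3) unfolding semilinear_bij_def by blast
  obtain z2 where z2: "ring_automorphism z2" "\<And>r v. f2 (smul2 r v) = smul2 (z2 r) (f2 v)"
    and bf2: "bij f2"
    and add2: "\<And>v w. f2 (fst v + fst w, snd v + snd w) = (fst (f2 v) + fst (f2 w), snd (f2 v) + snd (f2 w))"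
    using assms(5) unfolding semilinear_bij_def by blast
  have inj2: "inj f2" using bf2 bij_is_inj by blast
  have surj2: "surj f2" using bf2 bij_is_surj by blast
  have bz2: "bij z2" using z2(1) unfolding ring_automorphism_def by blast
  define h where "h = (\<lambda>v. inv f2 (f1 v))"
  define \<phi> where "\<phi> = (\<lambda>r. inv z2 (z1 r))"
  have f2h: "f2 (h v) = f1 v" for v unfolding h_def using surj2 by (simp add: surj_f_inv_f)
  have z2phi: "z2 (\<phi> r) = z1 r" for r unfolding \<phi>_def using bz2 bij_is_surj surj_f_inv_f by metis
  have inj_z2: "inj z2" using bz2 bij_is_inj by blast
  have hadd: "h (x1+x2, y1+y2) = (fst (h (x1,y1)) + fst (h (x2,y2)), snd (h (x1,y1)) + snd (h (x2,y2)))" for x1 y1 x2 y2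
  proof -
    have "f2 (h (x1+x2, y1+y2)) = f1 (x1+x2, y1+y2)" by (rule f2h)
    also have "\<dots> = (fst (f1 (x1,y1)) + fst (f1 (x2,y2)), snd (f1 (x1,y1)) + snd (f1 (x2,y2)))"
      using add1[of "(x1,y1)" "(x2,y2)"] by simp
    also have "\<dots> = f2 (fst (h (x1,y1)) + fst (h (x2,y2)), snd (h (x1,y1)) + snd (h (x2,y2)))"
      using add2[of "h (x1,y1)" "h (x2,y2)"] f2h by simp
    finally show ?thesis using inj2 by (simp add: inj_eq)
  qed
  have hmul: "h (r*x, r*y) = (\<phi> r * fst (h (x,y)), \<phi> r * snd (h (x,y)))" for r x y
  proof -
    have "f2 (h (r*x, r*y)) = f1 (smul2 r (x,y))" using f2h by (simp add: smul2_def)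
    also have "\<dots> = smul2 (z2 (\<phi> r)) (f2 (h (x,y)))" using z1(2) z2phi f2h by simp
    also have "\<dots> = f2 (smul2 (\<phi> r) (h (x,y)))" using z2(2) by simp
    finally show ?thesis using inj2 by (simp add: inj_eq smul2_def)
  qed
  have phi1: "\<phi> 1 = 1"
  proof -
    have "z2 (\<phi> 1) = z2 1" using z2phi z1(1) z2(1) unfolding ring_automorphism_def by simp
    thus ?thesis using inj_z2 by (simp add: inj_eq)
  qed
  have hfix: "h ` p = p" if "p \<in> C" for p
  proof -
    obtain p0 where p0: "p0 \<in> projline" "C = component p0" using assms(7) unfolding is_component_def by blast
    have "p \<in> projline" using that p0 unfolding component_def by blast
    then have "f1 ` p = f2 ` p" using assms(4,6,8) that unfolding induced_by_def by auto
    then have "h ` p = inv f2 ` f2 ` p" unfolding h_def by (metis image_image)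
    thus ?thesis using inj2 by (simp add: image_inv_f_f)
  qed
  obtain p0 where p0: "p0 \<in> projline" "C = component p0" using assms(7) unfolding is_component_def by blast
  obtain a b where ab: "p0 = cyc a b" "admissible a b" using p0(1) unfolding projline_def by blast
  obtain c d where iv: "inv2 a b c d" using ab(2) unfolding admissible_def by blast
  have p0C: "p0 \<in> C" using p0 unfolding component_def by simp
  have rC: "cyc (r*a+c) (r*b+d) \<in> C" for r
  proof -
    have i1: "inv2 a b (r*a+c) (r*b+d)" using inv2_rowop[OF iv] .
    have "cyc (r*a+c) (r*b+d) \<in> projline" unfolding projline_def admissible_def
      using inv2_swap[OF i1] by blast
    moreover have "distant p0 (cyc (r*a+c) (r*b+d))" unfolding distant_def using ab(1) i1 by blast
    ultimately show ?thesis using p0 unfolding component_def distant_rel_def by auto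
  qed
  have hall: "h ` cyc x y = cyc x y" for x y
    using key[of h \<phi> a b c d x y, OF hadd hmul phi1 iv] hfix rC p0C ab(1) by blast
  show ?thesis
  proof
    fix q :: "('a \<times> 'a) set" assume q: "q \<in> projline"
    then obtain x y where "q = cyc x y" unfolding projline_def by blast
    have "f1 ` q = f2 ` (h ` q)" by (simp add: image_image f2h)
    then have "f1 ` q = f2 ` q" using hall \<open>q = cyc x y\<close> by simp
    thus "g1 q = g2 q" using assms(4,6) q unfolding induced_by_def by simp
  qed
qed

end
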